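(* Let $p\ge0$, $m\ge1$ be integers with $p+\frac m2>1$. Let $\mathbb{H}$ be the minimal operator in $\mathbb{B}_p$ generated by $H^{p,m}=a^{*p}(a^m+a^{*m})a^p$, i.e. the closure of the restriction of $H^{p,m}$ to the polynomials in $\mathbb{B}_p$. Then $\mathbb{H}$ is a closed symmetric operator which is completely indeterminate: its deficiency numbers satisfy $n_+=n_-=m$.
   Context: The Bargmann space $\mathbb{B}$ is the Hilbert space of entire functions with $\|\phi\|^2=\int_{\mathbb{C}}|\phi(z)|^2e^{-|z|^2}dx\,dy<\infty$; $e_k(z)=z^k/\sqrt{k!}$ is an orthonormal basis; $a\phi=\phi'$, $a^*\phi=z\phi$. $\mathbb{B}_p=\{\phi\in\mathbb{B}:\phi(0)=\phi'(0)=\dots=\phi^{(p-1)}(0)=0\}$, the closed span of $\{e_k:k\ge p\}$. In this basis $H^{p,m}e_k=0$ for $k<p$, $H^{p,m}e_k=\frac{\sqrt{k!(k+m)!}}{(k-p)!}e_{k+m}$ for $p\le k<p+m$, and $H^{p,m}e_k=\frac{\sqrt{k!(k-m)!}}{(k-p-m)!}e_{k-m}+\frac{\sqrt{k!(k+m)!}}{(k-p)!}e_{k+m}$ for $k\ge p+m$. For a closed symmetric operator $T$ the deficiency numbers are $n_\pm=\dim\ker(T^*\mp iI)$; $T$ (represented by a block Jacobi matrix with $m\times m$ blocks) is called completely indeterminate if $n_+=n_-=m$. *)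

theory Defs
  imports Complex_Main
begin

text \<open>The Bargmann space is modelled through its orthonormal basis e_k = z^k / sqrt(k!):
  a vector phi = sum_k x_k e_k is identified with its coefficient sequence x :: nat => complex,
  and the norm is the l2 norm of x. B_p is the closed span of e_k with k >= p.\<close>

type_synonym vec = "nat \<Rightarrow> complex"

definition l2 :: "vec \<Rightarrow> bool" where
  "l2 x \<longleftrightarrow> summable (\<lambda>k. (cmod (x k))^2)"

definition Bp :: "nat \<Rightarrow> vec set" where
  "Bp p = {x. l2 x \<and> (\<forall>k<p. x k = 0)}"

definition inner_l2 :: "vec \<Rightarrow> vec \<Rightarrow> complex" where
  "inner_l2 x y = (\<Sum>k. x k * cnj (y k))"

definition conv_l2 :: "(nat \<Rightarrow> vec) \<Rightarrow> vec \<Rightarrow> bool" where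
  "conv_l2 xs x \<longleftrightarrow> (\<lambda>n. \<Sum>k. (cmod (xs n k - x k))^2) \<longlonglongrightarrow> 0"

definition poly_Bp :: "nat \<Rightarrow> vec \<Rightarrow> bool" where
  "poly_Bp p x \<longleftrightarrow> finite {k. x k \<noteq> 0} \<and> (\<forall>k<p. x k = 0)"

text \<open>Matrix coefficients: H e_k = cminus k e_(k-m) + cplus k e_(k+m).\<close>
definition cplus :: "nat \<Rightarrow> nat \<Rightarrow> nat \<Rightarrow> real" where
  "cplus p m k = (if p \<le> k then sqrt (fact k * fact (k + m)) / fact (k - p) else 0)"

definition cminus :: "nat \<Rightarrow> nat \<Rightarrow> nat \<Rightarrow> real" where
  "cminus p m k = (if p + m \<le> k then sqrt (fact k * fact (k - m)) / fact (k - p - m) else 0)"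

definition Hpm :: "nat \<Rightarrow> nat \<Rightarrow> vec \<Rightarrow> vec" where
  "Hpm p m x = (\<lambda>j. of_real (cminus p m (j + m)) * x (j + m)
                  + (if m \<le> j then of_real (cplus p m (j - m)) * x (j - m) else 0))"

text \<open>Operators are represented by their graphs, subsets of B_p x B_p.
  The minimal operator is the closure of the graph of H restricted to polynomials.\<close>
definition Hmin :: "nat \<Rightarrow> nat \<Rightarrow> (vec \<times> vec) set" where
  "Hmin p m = {(x, y). x \<in> Bp p \<and> y \<in> Bp p \<and>
     (\<exists>xs. (\<forall>n. poly_Bp p (xs n)) \<and> conv_l2 xs x \<and> conv_l2 (\<lambda>n. Hpm p m (xs n)) y)}"

definition op_dom :: "(vec \<times> vec) set \<Rightarrow> vec set" where
  "op_dom G = fst ` G"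

definition is_operator :: "nat \<Rightarrow> (vec \<times> vec) set \<Rightarrow> bool" where
  "is_operator p G \<longleftrightarrow> G \<subseteq> Bp p \<times> Bp p \<and> (\<forall>x y y'. (x, y) \<in> G \<longrightarrow> (x, y') \<in> G \<longrightarrow> y = y')"

definition densely_defined :: "nat \<Rightarrow> (vec \<times> vec) set \<Rightarrow> bool" where
  "densely_defined p G \<longleftrightarrow> (\<forall>x\<in>Bp p. \<exists>xs. (\<forall>n. xs n \<in> op_dom G) \<and> conv_l2 xs x)"

definition closed_op :: "nat \<Rightarrow> (vec \<times> vec) set \<Rightarrow> bool" where
  "closed_op p G \<longleftrightarrow> (\<forall>xs ys x y. (\<forall>n. (xs n, ys n) \<in> G) \<and> x \<in> Bp p \<and> y \<in> Bp p
      \<and> conv_l2 xs x \<and> conv_l2 ys y \<longrightarrow> (x, y) \<in> G)"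

definition symmetric_op :: "nat \<Rightarrow> (vec \<times> vec) set \<Rightarrow> bool" where
  "symmetric_op p G \<longleftrightarrow> is_operator p G \<and> densely_defined p G \<and>
     (\<forall>(x, u)\<in>G. \<forall>(y, v)\<in>G. inner_l2 u y = inner_l2 x v)"

definition adjoint_op :: "nat \<Rightarrow> (vec \<times> vec) set \<Rightarrow> (vec \<times> vec) set" where
  "adjoint_op p G = {(y, z). y \<in> Bp p \<and> z \<in> Bp p \<and>
      (\<forall>(x, w)\<in>G. inner_l2 w y = inner_l2 x z)}"

definition eig_space :: "(vec \<times> vec) set \<Rightarrow> complex \<Rightarrow> vec set" where
  "eig_space G lam = {y. (y, (\<lambda>k. lam * y k)) \<in> G}"

definition has_dim :: "vec set \<Rightarrow> nat \<Rightarrow> bool" where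
  "has_dim S d \<longleftrightarrow> (\<exists>v :: nat \<Rightarrow> vec.
      (\<forall>j<d. v j \<in> S) \<and>
      (\<forall>c :: nat \<Rightarrow> complex. (\<forall>k. (\<Sum>j<d. c j * v j k) = 0) \<longrightarrow> (\<forall>j<d. c j = 0)) \<and>
      (\<forall>y\<in>S. \<exists>c :: nat \<Rightarrow> complex. y = (\<lambda>k. \<Sum>j<d. c j * v j k)))"

definition deficiency_plus :: "nat \<Rightarrow> (vec \<times> vec) set \<Rightarrow> nat \<Rightarrow> bool" where
  "deficiency_plus p G d \<longleftrightarrow> has_dim (eig_space (adjoint_op p G) \<i>) d"

definition deficiency_minus :: "nat \<Rightarrow> (vec \<times> vec) set \<Rightarrow> nat \<Rightarrow> bool" where
  "deficiency_minus p G d \<longleftrightarrow> has_dim (eig_space (adjoint_op p G) (- \<i>)) d"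

end

theory Submission
  imports Defs "HOL-Analysis.Summation_Tests"
begin


lemma fact_split_p:
  "p \<le> k \<Longrightarrow> (fact k :: real) = fact (k - p) * (\<Prod>s<p. real k - real s)"
proof (induction p)
  case 0 then show ?case by simp
next
  case (Suc p)
  then have "(fact k :: real) = fact (k - p) * (\<Prod>s<p. real k - real s)" by simp
  moreover have "(fact (k - p) :: real) = real (k - p) * fact (k - Suc p)"
    using Suc.prems by (metis Suc_diff_Suc fact_Suc less_eq_Suc_le of_nat_fact of_nat_mult)
  moreover have "real (k - p) = real k - real p" using Suc.prems by simp
  ultimately show ?case by (simp add: algebra_simps)
qed

lemma fact_split_m:
  "(fact (k + m) :: real) = fact k * (\<Prod>s<m. real k + real s + 1)"
  by (induction m) (auto simp: algebra_simps)

definition FF :: "nat \<Rightarrow> nat \<Rightarrow> real" where "FF p k = (\<Prod>s<p. real k - real s)"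
definition GG :: "nat \<Rightarrow> nat \<Rightarrow> real" where "GG m k = (\<Prod>s<m. real k + real s + 1)"

lemma FF_ge1: "p \<le> k \<Longrightarrow> FF p k \<ge> 1"
  unfolding FF_def by (rule prod_ge_1) auto

lemma GG_ge1: "GG m k \<ge> 1"
  unfolding GG_def by (rule prod_ge_1) auto

lemma cplus_sq: "p \<le> k \<Longrightarrow> (cplus p m k)^2 = (FF p k)^2 * GG m k"
proof -
  assume pk: "p \<le> k"
  have f1: "(fact k :: real) = fact (k - p) * FF p k" using fact_split_p[OF pk] by (simp add: FF_def)
  have f2: "(fact (k+m) :: real) = fact k * GG m k" by (simp add: fact_split_m GG_def)
  have "(cplus p m k)^2 = (fact k * fact (k+m)) / (fact (k-p))^2"
    using pk by (simp add: cplus_def power_divide)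
  also have "\<dots> = (FF p k)^2 * GG m k" using f1 f2 by (simp add: power2_eq_square field_simps)
  finally show ?thesis .
qed

lemma cplus_nonneg: "cplus p m k \<ge> 0" by (simp add: cplus_def)

lemma cplus_eq: "p \<le> k \<Longrightarrow> cplus p m k = FF p k * sqrt (GG m k)"
proof -
  assume pk: "p \<le> k"
  have "cplus p m k = sqrt ((cplus p m k)^2)" using cplus_nonneg by simp
  also have "\<dots> = FF p k * sqrt (GG m k)" using cplus_sq[OF pk] FF_ge1[OF pk]
    by (simp add: real_sqrt_mult)
  finally show ?thesis .
qed

lemma cplus_ge1: "p \<le> k \<Longrightarrow> cplus p m k \<ge> 1"
proof -
  assume pk: "p \<le> k"
  have "sqrt (GG m k) \<ge> 1" using GG_ge1 by simp
  then have "FF p k * sqrt (GG m k) \<ge> 1 * 1" using FF_ge1[OF pk] by (intro mult_mono) auto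
  then show ?thesis using cplus_eq[OF pk] by simp
qed

lemma cplus_zero: "k < p \<Longrightarrow> cplus p m k = 0" by (simp add: cplus_def)
lemma cminus_shift: "cminus p m (k + m) = cplus p m k" by (simp add: cminus_def cplus_def mult.commute)
lemma cminus_zero: "k < p + m \<Longrightarrow> cminus p m k = 0" by (simp add: cminus_def)


lemma FF_logconc: "p + m \<le> k \<Longrightarrow> FF p (k - m) * FF p (k + m) \<le> (FF p k)^2"
proof -
  assume h: "p + m \<le> k"
  have "FF p (k - m) * FF p (k + m) = (\<Prod>s<p. (real k - real m - real s) * (real k + real m - real s))"
    using h by (simp add: FF_def prod.distrib[symmetric] of_nat_diff)
  also have "\<dots> \<le> (\<Prod>s<p. (real k - real s) * (real k - real s))"
  proof (rule prod_mono)
    fix s assume "s \<in> {..<p}"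
    then have "real s < real p" by simp
    then have a: "real k - real m - real s \<ge> 0" using h by linarith
    have "(real k - real m - real s) * (real k + real m - real s) = (real k - real s)^2 - (real m)^2"
      by (simp add: power2_eq_square algebra_simps)
    then have e: "(real k - real m - real s) * (real k + real m - real s) = (real k - real s) * (real k - real s) - real m * real m"
      by (simp add: power2_eq_square)
    have b: "real k + real m - real s \<ge> 0" using a by linarith
    have "0 \<le> real m * real m" by simp
    then show "0 \<le> (real k - real m - real s) * (real k + real m - real s) \<and>
      (real k - real m - real s) * (real k + real m - real s) \<le> (real k - real s) * (real k - real s)"
      using a b e mult_nonneg_nonneg[OF a b] by linarith
  qed
  also have "\<dots> = (FF p k)^2" by (simp add: FF_def prod.distrib power2_eq_square)
  finally show ?thesis .
qed

lemma GG_logconc: "m \<le> k \<Longrightarrow> GG m (k - m) * GG m (k + m) \<le> (GG m k)^2"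
proof -
  assume h: "m \<le> k"
  have "GG m (k - m) * GG m (k + m) = (\<Prod>s<m. (real k - real m + real s + 1) * (real k + real m + real s + 1))"
    using h by (simp add: GG_def prod.distrib[symmetric] of_nat_diff)
  also have "\<dots> \<le> (\<Prod>s<m. (real k + real s + 1) * (real k + real s + 1))"
  proof (rule prod_mono)
    fix s assume "s \<in> {..<m}"
    have a: "real k - real m + real s + 1 \<ge> 0" using h by simp
    have "(real k - real m + real s + 1) * (real k + real m + real s + 1) = (real k + real s + 1)^2 - (real m)^2"
      by (simp add: power2_eq_square algebra_simps)
    then have e: "(real k - real m + real s + 1) * (real k + real m + real s + 1) = (real k + real s + 1) * (real k + real s + 1) - real m * real m"
      by (simp add: power2_eq_square)
    have b: "real k + real m + real s + 1 \<ge> 0" by simp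
    have "0 \<le> real m * real m" by simp
    then show "0 \<le> (real k - real m + real s + 1) * (real k + real m + real s + 1) \<and>
      (real k - real m + real s + 1) * (real k + real m + real s + 1) \<le> (real k + real s + 1) * (real k + real s + 1)"
      using a b e mult_nonneg_nonneg[OF a b] by linarith
  qed
  also have "\<dots> = (GG m k)^2" by (simp add: GG_def prod.distrib power2_eq_square)
  finally show ?thesis .
qed

lemma cplus_logconc: "p + m \<le> k \<Longrightarrow> cplus p m (k - m) * cplus p m (k + m) \<le> (cplus p m k)^2"
proof -
  assume h: "p + m \<le> k"
  have p1: "p \<le> k - m" "p \<le> k" "p \<le> k + m" using h by auto
  have "(cplus p m (k - m) * cplus p m (k + m))^2 = (FF p (k - m) * FF p (k + m))^2 * (GG m (k - m) * GG m (k + m))"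
    using cplus_sq[OF p1(1)] cplus_sq[OF p1(3)] by (simp add: power_mult_distrib)
  also have "\<dots> \<le> ((FF p k)^2)^2 * (GG m k)^2"
  proof (rule mult_mono)
    have "0 \<le> FF p (k - m) * FF p (k + m)" using FF_ge1 p1 by (meson mult_nonneg_nonneg order_trans zero_le_one)
    then show "(FF p (k - m) * FF p (k + m))^2 \<le> ((FF p k)^2)^2"
      using FF_logconc[OF h] power_mono by blast
    show "GG m (k - m) * GG m (k + m) \<le> (GG m k)^2" using GG_logconc h by simp
  qed (auto simp: GG_ge1 order_trans[OF zero_le_one])
  also have "\<dots> = ((cplus p m k)^2)^2" using cplus_sq[OF p1(2)] by (simp add: power_mult_distrib)
  finally have "(cplus p m (k - m) * cplus p m (k + m))^2 \<le> ((cplus p m k)^2)^2" .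
  then show ?thesis
    by (meson cplus_nonneg mult_nonneg_nonneg power2_le_imp_le zero_le_power2)
qed

lemma FF_ratio: "p \<le> k \<Longrightarrow> FF p (k + m) \<le> (1 + real m)^p * FF p k"
proof -
  assume h: "p \<le> k"
  have "FF p (k + m) \<le> (\<Prod>s<p. (1 + real m) * (real k - real s))"
    unfolding FF_def
  proof (rule prod_mono)
    fix s assume "s \<in> {..<p}"
    then have "real k - real s \<ge> 1" using h by simp
    moreover have "real m * 1 \<le> real m * (real k - real s)" using \<open>real k - real s \<ge> 1\<close>
      by (intro mult_left_mono) auto
    ultimately show "0 \<le> real (k + m) - real s \<and> real (k + m) - real s \<le> (1 + real m) * (real k - real s)"
      by (simp add: algebra_simps)
  qed
  also have "\<dots> = (1 + real m)^p * FF p k" by (simp add: FF_def prod.distrib)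
  finally show ?thesis .
qed

lemma GG_ratio: "GG m (k + m) \<le> (1 + real m)^m * GG m k"
proof -
  have "GG m (k + m) \<le> (\<Prod>s<m. (1 + real m) * (real k + real s + 1))"
    unfolding GG_def
  proof (rule prod_mono)
    fix s assume "s \<in> {..<m}"
    have "real k + real s + 1 \<ge> 1" by simp
    then show "0 \<le> real (k + m) + real s + 1 \<and> real (k + m) + real s + 1 \<le> (1 + real m) * (real k + real s + 1)"
      by (simp add: algebra_simps)
  qed
  also have "\<dots> = (1 + real m)^m * GG m k" by (simp add: GG_def prod.distrib)
  finally show ?thesis .
qed

definition KK :: "nat \<Rightarrow> nat \<Rightarrow> real" where "KK p m = (1 + real m)^(p + m)"

lemma cplus_ratio: "p \<le> k \<Longrightarrow> cplus p m (k + m) \<le> KK p m * cplus p m k"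
proof -
  assume h: "p \<le> k"
  have h2: "p \<le> k + m" using h by simp
  have "(cplus p m (k + m))^2 = (FF p (k+m))^2 * GG m (k+m)" using cplus_sq[OF h2] .
  also have "\<dots> \<le> ((1 + real m)^p * FF p k)^2 * ((1 + real m)^m * GG m k)"
    apply (rule mult_mono)
    using FF_ratio[OF h, of m] FF_ge1[OF h2] GG_ratio[of m k] GG_ge1[of m]
    by (auto intro!: power_mono order_trans[OF zero_le_one])
  also have "\<dots> = (1 + real m)^m * ((1 + real m)^p)^2 * (cplus p m k)^2"
    using cplus_sq[OF h] by (simp add: power_mult_distrib)
  also have "\<dots> \<le> (1 + real m)^m * (1 + real m)^m * ((1 + real m)^p)^2 * (cplus p m k)^2"
    by (intro mult_right_mono) auto
  also have "\<dots> = (KK p m * cplus p m k)^2"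
    by (simp add: KK_def power_mult_distrib power_add power2_eq_square algebra_simps)
  finally have sq: "(cplus p m (k + m))^2 \<le> (KK p m * cplus p m k)^2" .
  have "0 \<le> KK p m * cplus p m k" unfolding KK_def using cplus_nonneg by simp
  with sq show ?thesis by (rule power2_le_imp_le)
qed


lemma FF_lower: "2 * p \<le> k \<Longrightarrow> FF p k \<ge> (real k / 2)^p"
proof -
  assume h: "2 * p \<le> k"
  have "(real k / 2)^p = (\<Prod>s<p. real k / 2)" by simp
  also have "\<dots> \<le> FF p k" unfolding FF_def
  proof (rule prod_mono)
    fix s assume "s \<in> {..<p}"
    then have "2 * real s \<le> real k" using h by simp
    then show "0 \<le> real k / 2 \<and> real k / 2 \<le> real k - real s" by simp
  qed
  finally show ?thesis .
qed

lemma GG_lower: "GG m k \<ge> (real k / 2)^m"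
proof -
  have "(real k / 2)^m = (\<Prod>s<m. real k / 2)" by simp
  also have "\<dots> \<le> GG m k" unfolding GG_def
    by (rule prod_mono) simp
  finally show ?thesis .
qed

lemma cplus_lower:
  assumes "2 * p + m \<ge> 3" "2 * p \<le> k" "2 \<le> k"
  shows "cplus p m k \<ge> (real k / 2) powr (3/2)"
proof -
  have pk: "p \<le> k" using assms by simp
  have k1: "real k / 2 \<ge> 1" using assms by simp
  have "(real k / 2)^3 \<le> (real k / 2)^(2*p+m)" using assms(1) k1 by (intro power_increasing) auto
  also have "\<dots> = ((real k / 2)^p)^2 * (real k / 2)^m"
    by (simp only: power_add power_mult[symmetric] mult.commute[of 2 p])
  also have "\<dots> \<le> (FF p k)^2 * GG m k"
    using FF_lower[OF assms(2)] GG_lower[of k m] by (intro mult_mono power_mono) auto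
  also have "\<dots> = (cplus p m k)^2" using cplus_sq[OF pk] by simp
  finally have a: "(real k / 2)^3 \<le> (cplus p m k)^2" .
  have "(real k / 2) powr (3/2) = sqrt ((real k / 2) powr 3)" using k1 by (simp add: powr_half_sqrt_powr)
  also have "\<dots> = sqrt ((real k / 2)^3)" using k1 by (subst powr_realpow[symmetric]) auto
  also have "\<dots> \<le> sqrt ((cplus p m k)^2)" using a by (rule real_sqrt_le_mono)
  also have "\<dots> = cplus p m k" using cplus_nonneg by simp
  finally show ?thesis .
qed

lemma inv_cplus_summable:
  assumes "2 * p + m \<ge> 3"
  shows "summable (\<lambda>k. inverse (cplus p m k))"
proof (rule summable_comparison_test')
  show "summable (\<lambda>k. 2 powr (3/2) * real k powr (- (3/2)))"
    by (intro summable_mult) (simp add: summable_real_powr_iff)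
  fix k assume "k \<ge> 2 * p + 2"
  then have h: "2 * p \<le> k" "2 \<le> k" by auto
  have pos: "(real k / 2) powr (3/2) > 0" using h by simp
  have "norm (inverse (cplus p m k)) = inverse (cplus p m k)" using cplus_nonneg by simp
  also have "\<dots> \<le> inverse ((real k / 2) powr (3/2))"
    using cplus_lower[OF assms h] pos by (intro le_imp_inverse_le) auto
  also have "\<dots> = 2 powr (3/2) * real k powr (- (3/2))"
  proof -
    have "(real k / 2) powr (3/2) = real k powr (3/2) / 2 powr (3/2)" by (rule powr_divide)
    moreover have e: "inverse (a / b) = b * inverse a" for a b :: real by (simp add: divide_inverse)
    ultimately have "inverse ((real k / 2) powr (3/2)) = 2 powr (3/2) * inverse (real k powr (3/2))"
      by (simp only: e)
    then show ?thesis by (simp only: powr_minus)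
  qed
  finally show "norm (inverse (cplus p m k)) \<le> 2 powr (3/2) * real k powr (- (3/2))" .
qed



lemma step_real:
  fixes a b c K U W U' :: real
  assumes b1: "b \<ge> 1" and a0: "a \<ge> 0" and c0: "c \<ge> 0" and ac: "a * c \<le> b^2"
    and cK: "c \<le> K * b" and U0: "U \<ge> 0" and W0: "W \<ge> 0" and U'0: "U' \<ge> 0"
    and rec: "U' \<le> (U + a * W) / b"
  shows "b * U^2 + c * U'^2 \<le> (1 + (1 + 2 * K) / b) * (a * W^2 + b * U^2)"
proof -
  have bpos: "b > 0" using b1 by simp
  have "K * b \<ge> 0" using cK c0 by linarith
  then have K0: "K \<ge> 0" using bpos by (simp add: zero_le_mult_iff)
  have "U'^2 \<le> ((U + a * W) / b)^2" using rec U'0 by (intro power_mono) auto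
  also have "\<dots> = (U + a * W)^2 / b^2" by (simp add: power_divide)
  also have "\<dots> \<le> ((1 + b) * U^2 + (1 + 1/b) * (a * W)^2) / b^2"
  proof (intro divide_right_mono)
    have "0 \<le> (b * U - a * W)^2 / b" using bpos by simp
    also have "(b * U - a * W)^2 / b = b * U^2 - 2 * U * (a * W) + (a * W)^2 / b"
    proof -
      have "(b * U - a * W)^2 = b * (b * U^2) - b * (2 * U * (a * W)) + (a * W)^2"
        by (simp add: power2_eq_square algebra_simps)
      then show ?thesis using bpos by (simp add: add_divide_distrib diff_divide_distrib)
    qed
    finally have "2 * U * (a * W) \<le> b * U^2 + (a * W)^2 / b" by simp
    moreover have "(U + a * W)^2 = U^2 + 2 * U * (a * W) + (a * W)^2" by (simp add: power2_eq_square algebra_simps)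
    moreover have "(1 + b) * U^2 + (1 + 1/b) * (a * W)^2 = U^2 + b * U^2 + (a * W)^2 + (a * W)^2 / b"
      by (simp add: algebra_simps)
    ultimately show "(U + a * W)^2 \<le> (1 + b) * U^2 + (1 + 1/b) * (a * W)^2" by linarith
  qed simp
  finally have u: "U'^2 \<le> ((1 + b) * U^2 + (1 + 1/b) * (a * W)^2) / b^2" .
  have "c * U'^2 \<le> c * (((1 + b) * U^2 + (1 + 1/b) * (a * W)^2) / b^2)"
    using u c0 by (rule mult_left_mono)
  also have "\<dots> = (c * (1 + b) / b^2) * U^2 + (1 + 1/b) * (a * c / b^2) * a * W^2"
    by (simp add: add_divide_distrib power2_eq_square algebra_simps)
  also have "\<dots> \<le> (2 * K) * U^2 + (1 + 1/b) * 1 * a * W^2"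
  proof (intro add_mono mult_right_mono mult_left_mono)
    have t: "(1 + b) / b \<le> 2" using b1 bpos by (simp add: divide_le_eq)
    have "c * (1 + b) / b^2 \<le> K * b * (1 + b) / b^2" using cK bpos by (intro divide_right_mono mult_right_mono) auto
    also have "K * b * (1 + b) / b^2 = K * ((1 + b) / b)" using bpos by (simp add: power2_eq_square)
    also have "K * ((1 + b) / b) \<le> K * 2" using t K0 by (rule mult_left_mono)
    finally show "c * (1 + b) / b^2 \<le> 2 * K" by simp
    show "a * c / b^2 \<le> 1" using ac bpos by simp
  qed (use a0 W0 bpos in auto)
  finally have cu: "c * U'^2 \<le> 2 * K * U^2 + (1 + 1/b) * a * W^2" by simp
  have "b * U^2 + c * U'^2 \<le> b * U^2 + 2 * K * U^2 + (1 + 1/b) * a * W^2" using cu by simp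
  also have "\<dots> = (1 + 2 * K / b) * (b * U^2) + (1 + 1/b) * (a * W^2)"
    using bpos by (simp add: algebra_simps)
  also have "\<dots> \<le> (1 + (1 + 2 * K) / b) * (b * U^2) + (1 + (1 + 2 * K) / b) * (a * W^2)"
  proof -
    have i1: "1 + 2 * K / b \<le> 1 + (1 + 2 * K) / b" using bpos by (simp add: divide_right_mono)
    have i2: "1 + 1 / b \<le> 1 + (1 + 2 * K) / b" using bpos K0 by (simp add: divide_right_mono)
    have n1: "0 \<le> b * U^2" "0 \<le> a * W^2" using bpos a0 by auto
    show ?thesis using add_mono[OF mult_right_mono[OF i1 n1(1)] mult_right_mono[OF i2 n1(2)]] .
  qed
  also have "\<dots> = (1 + (1 + 2 * K) / b) * (a * W^2 + b * U^2)" by (simp add: algebra_simps)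
  finally show ?thesis .
qed


lemma rec_l2:
  fixes y :: "nat \<Rightarrow> complex"
  assumes m1: "m \<ge> 1" and pm: "2 * p + m \<ge> 3" and lam: "cmod lam = 1"
    and y0: "\<forall>k<p. y k = 0"
    and rec: "\<forall>k\<ge>p. of_real (cplus p m k) * y (k + m)
        + (if m \<le> k then of_real (cplus p m (k - m)) * y (k - m) else 0) = lam * y k"
  shows "summable (\<lambda>k. (cmod (y k))^2)"
proof -
  define b where "b = cplus p m"
  define K where "K = KK p m"
  define \<delta> where "\<delta> k = (1 + 2 * K) * inverse (b k)" for k
  define Q where "Q k = b k * (cmod (y k))^2 + b (k + m) * (cmod (y (k + m)))^2" for k
  have K0: "K \<ge> 0" unfolding K_def KK_def by simp
  have b0: "b k \<ge> 0" for k unfolding b_def by (rule cplus_nonneg)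
  have d0: "\<delta> k \<ge> 0" for k unfolding \<delta>_def using K0 b0 by simp
  have Q0: "Q k \<ge> 0" for k unfolding Q_def using b0 by simp
  have dsum: "summable \<delta>" unfolding \<delta>_def b_def
    using inv_cplus_summable[OF pm] by (rule summable_mult)
  have step: "Q k \<le> (1 + \<delta> k) * Q (k - m)" if k: "k \<ge> p + m" for k
  proof -
    have mk: "m \<le> k" "p \<le> k" "p \<le> k - m" using k by auto
    have r: "of_real (b k) * y (k + m) = lam * y k - of_real (b (k - m)) * y (k - m)"
      using rec mk unfolding b_def by (auto simp: algebra_simps)
    have "b k * cmod (y (k + m)) = cmod (of_real (b k) * y (k + m))"
      using b0 by (simp add: norm_mult)
    also have "\<dots> \<le> cmod (lam * y k) + cmod (of_real (b (k - m)) * y (k - m))"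
      unfolding r by (rule norm_triangle_ineq4)
    also have "\<dots> = cmod (y k) + b (k - m) * cmod (y (k - m))"
      using lam b0 by (simp add: norm_mult)
    finally have r2: "b k * cmod (y (k + m)) \<le> cmod (y k) + b (k - m) * cmod (y (k - m))" .
    have bk1: "b k \<ge> 1" unfolding b_def using cplus_ge1 mk by simp
    then have r3: "cmod (y (k + m)) \<le> (cmod (y k) + b (k - m) * cmod (y (k - m))) / b k"
      using r2 by (simp add: le_divide_eq mult.commute)
    have lc: "b (k - m) * b (k + m) \<le> (b k)^2" unfolding b_def using cplus_logconc k by simp
    have rt: "b (k + m) \<le> K * b k" unfolding b_def K_def using cplus_ratio mk by simp
    have "Q k = b k * (cmod (y k))^2 + b (k + m) * (cmod (y (k + m)))^2" by (simp add: Q_def)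
    also have "\<dots> \<le> (1 + (1 + 2 * K) / b k) * (b (k - m) * (cmod (y (k - m)))^2 + b k * (cmod (y k))^2)"
      by (rule step_real[OF bk1 b0 b0 lc rt norm_ge_zero norm_ge_zero norm_ge_zero r3])
    also have "\<dots> = (1 + \<delta> k) * Q (k - m)"
      using mk by (simp add: Q_def \<delta>_def divide_inverse)
    finally show ?thesis .
  qed
  define Q00 where "Q00 = (\<Sum>r\<in>{p..<p+m}. Q r)"
  have bound: "k \<ge> p \<longrightarrow> Q k \<le> Q00 * exp (\<Sum>j<k+1. \<delta> j)" for k
  proof (induction k rule: less_induct)
    case (less k)
    show ?case
    proof
      assume kp: "p \<le> k"
      have e1: "exp (\<Sum>j<k+1. \<delta> j) \<ge> 1" using d0 by (simp add: sum_nonneg)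
      have Q00n: "Q00 \<ge> 0" unfolding Q00_def using Q0 by (simp add: sum_nonneg)
      show "Q k \<le> Q00 * exp (\<Sum>j<k+1. \<delta> j)"
      proof (cases "k < p + m")
        case True
        then have "Q k \<le> Q00" unfolding Q00_def using kp Q0
          by (intro member_le_sum) auto
        also have "\<dots> \<le> Q00 * exp (\<Sum>j<k+1. \<delta> j)" using e1 Q00n
          by (metis mult_left_mono mult.right_neutral)
        finally show ?thesis .
      next
        case False
        then have k: "k \<ge> p + m" by simp
        have ih: "Q (k - m) \<le> Q00 * exp (\<Sum>j<k - m + 1. \<delta> j)"
          using less.IH[of "k - m"] k m1 by auto
        have "Q k \<le> (1 + \<delta> k) * Q (k - m)" using step k by simp
        also have "\<dots> \<le> exp (\<delta> k) * (Q00 * exp (\<Sum>j<k - m + 1. \<delta> j))"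
          using ih d0 Q0 by (intro mult_mono) (auto simp: exp_ge_add_one_self add.commute)
        also have "\<dots> = Q00 * exp (\<delta> k + (\<Sum>j<k - m + 1. \<delta> j))" by (simp add: exp_add)
        also have "\<dots> \<le> Q00 * exp (\<Sum>j<k+1. \<delta> j)"
        proof -
          have sub: "insert k {..<k - m + 1} \<subseteq> {..<k+1}" using m1 by auto
          have nin: "k \<notin> {..<k - m + 1}" using m1 k by auto
          have "\<delta> k + (\<Sum>j<k - m + 1. \<delta> j) = (\<Sum>j\<in>insert k {..<k - m + 1}. \<delta> j)"
            using nin by simp
          also have "\<dots> \<le> (\<Sum>j<k+1. \<delta> j)" using sub d0 by (intro sum_mono2) auto
          finally show ?thesis using Q00n by (intro mult_left_mono) auto
        qed
        finally show ?thesis .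
      qed
    qed
  qed
  define C where "C = Q00 * exp (suminf \<delta>)"
  have C0: "C \<ge> 0" unfolding C_def Q00_def using Q0 by (simp add: sum_nonneg)
  have yb: "(cmod (y k))^2 \<le> C * inverse (b k)" for k
  proof (cases "k < p")
    case True then show ?thesis using y0 C0 b0 by simp
  next
    case False
    then have kp: "p \<le> k" by simp
    have bk1: "b k \<ge> 1" unfolding b_def using cplus_ge1 kp by simp
    have "b k * (cmod (y k))^2 \<le> Q k" unfolding Q_def using b0 by simp
    also have "\<dots> \<le> Q00 * exp (\<Sum>j<k+1. \<delta> j)" using bound kp by simp
    also have "\<dots> \<le> C" unfolding C_def
      using sum_le_suminf[OF dsum, of "{..<k+1}"] d0 Q0 unfolding Q00_def
      by (intro mult_left_mono) (auto simp: sum_nonneg)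
    finally have "b k * (cmod (y k))^2 \<le> C" .
    then show ?thesis using bk1 by (simp add: field_simps)
  qed
  show ?thesis
  proof (rule summable_comparison_test')
    show "summable (\<lambda>k. C * inverse (b k))" unfolding b_def
      using inv_cplus_summable[OF pm] by (rule summable_mult)
    fix k :: nat assume "k \<ge> 0"
    show "norm ((cmod (y k))^2) \<le> C * inverse (b k)" using yb by simp
  qed
qed



definition NN :: "(nat \<Rightarrow> complex) \<Rightarrow> real" where "NN x = (\<Sum>k. (cmod (x k))^2)"

lemma cmod_add_sq: "(cmod (a + b))^2 \<le> 2 * (cmod a)^2 + 2 * (cmod b)^2"
proof -
  have "cmod (a + b) \<le> cmod a + cmod b" by (rule norm_triangle_ineq)
  then have "(cmod (a + b))^2 \<le> (cmod a + cmod b)^2" by (intro power_mono) auto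
  also have "\<dots> \<le> 2 * (cmod a)^2 + 2 * (cmod b)^2"
    using sum_squares_ge_zero[of "cmod a - cmod b" 0] by (simp add: power2_eq_square algebra_simps)
  finally show ?thesis .
qed

lemma l2_add: "l2 x \<Longrightarrow> l2 y \<Longrightarrow> l2 (\<lambda>k. x k + y k)"
  unfolding l2_def
  by (rule summable_comparison_test'[where g = "\<lambda>k. 2 * (cmod (x k))^2 + 2 * (cmod (y k))^2"])
     (auto intro: summable_add summable_mult cmod_add_sq)

lemma l2_scale: "l2 x \<Longrightarrow> l2 (\<lambda>k. c * x k)"
  unfolding l2_def by (simp add: norm_mult power_mult_distrib summable_mult)

lemma l2_neg: "l2 x \<Longrightarrow> l2 (\<lambda>k. - x k)"
  unfolding l2_def by simp

lemma l2_diff: "l2 x \<Longrightarrow> l2 y \<Longrightarrow> l2 (\<lambda>k. x k - y k)"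
  using l2_add[of x "\<lambda>k. - y k"] l2_neg[of y] by simp

lemma l2_finite: "finite {k. x k \<noteq> 0} \<Longrightarrow> l2 x"
  unfolding l2_def by (rule summable_finite[of "{k. x k \<noteq> 0}"]) auto

lemma NN_nonneg: "l2 x \<Longrightarrow> NN x \<ge> 0"
  unfolding NN_def l2_def by (auto intro: suminf_nonneg)

lemma NN_add_le: "l2 x \<Longrightarrow> l2 y \<Longrightarrow> NN (\<lambda>k. x k + y k) \<le> 2 * NN x + 2 * NN y"
proof -
  assume a: "l2 x" "l2 y"
  then have s: "summable (\<lambda>k. 2 * (cmod (x k))^2)" "summable (\<lambda>k. 2 * (cmod (y k))^2)"
    unfolding l2_def by (auto intro: summable_mult)
  have "NN (\<lambda>k. x k + y k) \<le> (\<Sum>k. 2 * (cmod (x k))^2 + 2 * (cmod (y k))^2)"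
    unfolding NN_def using l2_add[OF a] s unfolding l2_def
    by (intro suminf_le cmod_add_sq summable_add) auto
  also have "\<dots> = 2 * NN x + 2 * NN y"
    unfolding NN_def using a unfolding l2_def by (simp add: suminf_add[symmetric] suminf_mult)
  finally show ?thesis .
qed

lemma prod_bound: "cmod (a * cnj b) \<le> (t * (cmod a)^2 + (cmod b)^2 / t) / 2" if "t > 0" for a b :: complex
proof -
  have "0 \<le> (sqrt t * cmod a - cmod b / sqrt t)^2" by simp
  also have "\<dots> = t * (cmod a)^2 - 2 * (cmod a * cmod b) + (cmod b)^2 / t"
  proof -
    have st: "sqrt t * sqrt t = t" using that by simp
    have e1: "(sqrt t * cmod a)^2 = t * (cmod a)^2" using that by (simp add: power_mult_distrib)
    have e2: "(cmod b / sqrt t)^2 = (cmod b)^2 / t" using that by (simp add: power_divide)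
    have e3: "2 * (sqrt t * cmod a) * (cmod b / sqrt t) = 2 * (cmod a * cmod b)" using that by simp
    show ?thesis unfolding power2_diff e1 e2 e3 by simp
  qed
  finally have "2 * (cmod a * cmod b) \<le> t * (cmod a)^2 + (cmod b)^2 / t" by linarith
  moreover have "cmod (a * cnj b) = cmod a * cmod b" by (simp add: norm_mult)
  ultimately have "2 * cmod (a * cnj b) \<le> t * (cmod a)^2 + (cmod b)^2 / t" by simp
  then show ?thesis by simp
qed

lemma prod_bound1: "cmod (a * cnj b) \<le> ((cmod a)^2 + (cmod b)^2) / 2" for a b :: complex
  using prod_bound[of 1 a b] by simp

lemma inner_summable: "l2 x \<Longrightarrow> l2 y \<Longrightarrow> summable (\<lambda>k. x k * cnj (y k))"
proof -
  assume a: "l2 x" "l2 y"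
  have s2: "summable (\<lambda>k. ((cmod (x k))^2 + (cmod (y k))^2) / 2)"
    using a unfolding l2_def by (intro summable_divide summable_add)
  have "summable (\<lambda>k. cmod (x k * cnj (y k)))"
    proof (rule summable_comparison_test'[OF s2, of 0])
    fix n show "norm (cmod (x n * cnj (y n))) \<le> ((cmod (x n))^2 + (cmod (y n))^2) / 2"
      using prod_bound1[of "x n" "y n"] by simp
  qed
  then show ?thesis by (rule summable_norm_cancel)
qed

lemma inner_bound:
  assumes "l2 x" "l2 y" "t > 0"
  shows "cmod (inner_l2 x y) \<le> (t * NN x + NN y / t) / 2"
proof -
  have s2: "summable (\<lambda>k. ((cmod (x k))^2 + (cmod (y k))^2) / 2)"
    using assms unfolding l2_def by (intro summable_divide summable_add)
  have s: "summable (\<lambda>k. cmod (x k * cnj (y k)))"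
    proof (rule summable_comparison_test'[OF s2, of 0])
    fix n show "norm (cmod (x n * cnj (y n))) \<le> ((cmod (x n))^2 + (cmod (y n))^2) / 2"
      using prod_bound1[of "x n" "y n"] by simp
  qed
  have s3: "summable (\<lambda>k. (t * (cmod (x k))^2 + (cmod (y k))^2 / t) / 2)"
    using assms unfolding l2_def by (intro summable_divide summable_add summable_mult)
  have "cmod (inner_l2 x y) \<le> (\<Sum>k. cmod (x k * cnj (y k)))"
    unfolding inner_l2_def using s by (rule summable_norm)
  also have "\<dots> \<le> (\<Sum>k. (t * (cmod (x k))^2 + (cmod (y k))^2 / t) / 2)"
    using s s3 by (intro suminf_le prod_bound[OF assms(3)])
  also have "\<dots> = (t * NN x + NN y / t) / 2"
  proof -
    have sx: "summable (\<lambda>k. t * (cmod (x k))^2)" "summable (\<lambda>k. (cmod (y k))^2 / t)"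
      using assms unfolding l2_def by (auto intro: summable_mult summable_divide)
    have "(\<Sum>k. (t * (cmod (x k))^2 + (cmod (y k))^2 / t) / 2) = (\<Sum>k. t * (cmod (x k))^2 + (cmod (y k))^2 / t) / 2"
      using summable_add[OF sx] by (rule suminf_divide)
    also have "(\<Sum>k. t * (cmod (x k))^2 + (cmod (y k))^2 / t) = (\<Sum>k. t * (cmod (x k))^2) + (\<Sum>k. (cmod (y k))^2 / t)"
      using sx by (rule suminf_add[symmetric])
    also have "(\<Sum>k. t * (cmod (x k))^2) = t * NN x" unfolding NN_def
      using assms(1) unfolding l2_def by (rule suminf_mult)
    also have "(\<Sum>k. (cmod (y k))^2 / t) = NN y / t" unfolding NN_def
      using assms(2) unfolding l2_def by (rule suminf_divide)
    finally show ?thesis .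
  qed
  finally show ?thesis .
qed

lemma inner_diff: "l2 x \<Longrightarrow> l2 x' \<Longrightarrow> l2 y \<Longrightarrow> inner_l2 x y - inner_l2 x' y = inner_l2 (\<lambda>k. x k - x' k) y"
  unfolding inner_l2_def by (simp add: suminf_diff inner_summable left_diff_distrib)

lemma inner_cnj: "l2 x \<Longrightarrow> l2 y \<Longrightarrow> inner_l2 y x = cnj (inner_l2 x y)"
proof -
  assume a: "l2 x" "l2 y"
  have "(\<lambda>k. x k * cnj (y k)) sums inner_l2 x y" unfolding inner_l2_def
    using inner_summable[OF a] by (rule summable_sums)
  then have "(\<lambda>k. cnj (x k * cnj (y k))) sums cnj (inner_l2 x y)" by (simp only: sums_cnj)
  then have "(\<lambda>k. y k * cnj (x k)) sums cnj (inner_l2 x y)" by (simp add: mult.commute)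
  then show ?thesis unfolding inner_l2_def by (rule sums_unique[symmetric])
qed

lemma conv_inner1:
  assumes xs: "\<And>n. l2 (xs n)" and x: "l2 x" and y: "l2 y" and c: "conv_l2 xs x"
  shows "(\<lambda>n. inner_l2 (xs n) y) \<longlonglongrightarrow> inner_l2 x y"
proof -
  have d: "l2 (\<lambda>k. xs n k - x k)" for n using l2_diff[OF xs x] .
  have c': "(\<lambda>n. NN (\<lambda>k. xs n k - x k)) \<longlonglongrightarrow> 0" using c unfolding conv_l2_def NN_def .
  have "(\<lambda>n. inner_l2 (xs n) y - inner_l2 x y) \<longlonglongrightarrow> 0"
  proof (rule LIMSEQ_I)
    fix r :: real assume r: "r > 0"
    define t where "t = (NN y + 1) / r"
    have t: "t > 0" unfolding t_def using r NN_nonneg[OF y] by simp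
    have "r / t > 0" using r t by simp
    with c' have "\<exists>no. \<forall>n\<ge>no. norm (NN (\<lambda>k. xs n k - x k) - 0) < r / t" by (rule LIMSEQ_D)
    then obtain no where no: "\<And>n. n \<ge> no \<Longrightarrow> NN (\<lambda>k. xs n k - x k) < r / t"
      using NN_nonneg[OF d] by fastforce
    show "\<exists>no. \<forall>n\<ge>no. norm (inner_l2 (xs n) y - inner_l2 x y - 0) < r"
    proof (intro exI allI impI)
      fix n assume "n \<ge> no"
      then have nb: "t * NN (\<lambda>k. xs n k - x k) < r" using no t by (simp add: field_simps)
      have yb: "NN y / t < r" unfolding t_def using r NN_nonneg[OF y] by (simp add: field_simps)
      have "norm (inner_l2 (xs n) y - inner_l2 x y - 0) = cmod (inner_l2 (\<lambda>k. xs n k - x k) y)"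
        using inner_diff[OF xs x y] by simp
      also have "\<dots> \<le> (t * NN (\<lambda>k. xs n k - x k) + NN y / t) / 2" by (rule inner_bound[OF d y t])
      also have "\<dots> < r" using nb yb by simp
      finally show "norm (inner_l2 (xs n) y - inner_l2 x y - 0) < r" .
    qed
  qed
  then show ?thesis by (simp add: LIM_zero_iff)
qed

lemma conv_inner2:
  assumes xs: "\<And>n. l2 (xs n)" and x: "l2 x" and y: "l2 y" and c: "conv_l2 xs x"
  shows "(\<lambda>n. inner_l2 y (xs n)) \<longlonglongrightarrow> inner_l2 y x"
proof -
  have "(\<lambda>n. cnj (inner_l2 (xs n) y)) \<longlonglongrightarrow> cnj (inner_l2 x y)"
    using conv_inner1[OF assms] by (rule tendsto_cnj)
  moreover have "inner_l2 y (xs n) = cnj (inner_l2 (xs n) y)" for n by (rule inner_cnj[OF xs y])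
  ultimately show ?thesis by (simp only: inner_cnj[OF x y])
qed



definition hh :: "nat \<Rightarrow> nat \<Rightarrow> nat \<Rightarrow> nat \<Rightarrow> real" where
  "hh p m j k = (if k = j + m then cminus p m (j + m) else 0)
     + (if m \<le> j \<and> k = j - m then cplus p m (j - m) else 0)"

lemma hh_sym: "m \<ge> 1 \<Longrightarrow> hh p m j k = hh p m k j"
  unfolding hh_def by (auto simp: cminus_shift)

lemma Hpm_sum:
  assumes "j < N" "j + m < N \<or> z (j + m) = 0"
  shows "Hpm p m z j = (\<Sum>k<N. of_real (hh p m j k) * z k)"
proof -
  have "(\<Sum>k<N. of_real (hh p m j k) * z k) =
     (\<Sum>k<N. (if k = j + m then of_real (cminus p m (j + m)) * z k else 0))
     + (\<Sum>k<N. (if m \<le> j \<and> k = j - m then of_real (cplus p m (j - m)) * z k else 0))"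
  proof -
    have "of_real (hh p m j k) * z k = (if k = j + m then of_real (cminus p m (j + m)) * z k else 0)
      + (if m \<le> j \<and> k = j - m then of_real (cplus p m (j - m)) * z k else 0)" for k
      by (simp add: hh_def distrib_right)
    then show ?thesis by (simp only: sum.distrib)
  qed
  also have "(\<Sum>k<N. (if k = j + m then of_real (cminus p m (j + m)) * z k else 0))
      = of_real (cminus p m (j + m)) * z (j + m)"
    using assms by (auto simp: sum.delta)
  also have "(\<Sum>k<N. (if m \<le> j \<and> k = j - m then of_real (cplus p m (j - m)) * z k else 0))
      = (if m \<le> j then of_real (cplus p m (j - m)) * z (j - m) else 0)"
    using assms by (cases "m \<le> j") (auto simp: sum.delta)
  finally show ?thesis by (simp add: Hpm_def)
qed

lemma Hpm_low: "j < p \<Longrightarrow> Hpm p m z j = 0"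
  by (simp add: Hpm_def cminus_zero cplus_zero)

lemma Hpm_high: "(\<And>k. k \<ge> M \<Longrightarrow> x k = 0) \<Longrightarrow> j \<ge> M + m \<Longrightarrow> Hpm p m x j = 0"
  by (simp add: Hpm_def)

lemma Hpm_sym:
  assumes m1: "m \<ge> 1" and xM: "\<And>k. k \<ge> M \<Longrightarrow> x k = 0"
  shows "inner_l2 (Hpm p m x) y = inner_l2 x (Hpm p m y)"
proof -
  define N where "N = M + m + 1"
  have "inner_l2 (Hpm p m x) y = (\<Sum>j<N. Hpm p m x j * cnj (y j))"
    unfolding inner_l2_def
    by (rule suminf_finite) (auto simp: N_def Hpm_high[OF xM])
  also have "\<dots> = (\<Sum>j<N. \<Sum>k<N. of_real (hh p m j k) * x k * cnj (y j))"
  proof (rule sum.cong[OF refl])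
    fix j assume j: "j \<in> {..<N}"
    have "Hpm p m x j = (\<Sum>k<N. of_real (hh p m j k) * x k)"
    proof (rule Hpm_sum)
      show "j < N" using j by simp
      show "j + m < N \<or> x (j + m) = 0" by (cases "j + m \<ge> M") (auto simp: xM N_def)
    qed
    then show "Hpm p m x j * cnj (y j) = (\<Sum>k<N. of_real (hh p m j k) * x k * cnj (y j))"
      by (simp add: sum_distrib_right)
  qed
  also have "\<dots> = (\<Sum>k<N. \<Sum>j<N. of_real (hh p m j k) * x k * cnj (y j))"
    by (rule sum.swap)
  also have "\<dots> = (\<Sum>k<N. x k * cnj (Hpm p m y k))"
  proof (rule sum.cong[OF refl])
    fix k assume k: "k \<in> {..<N}"
    show "(\<Sum>j<N. of_real (hh p m j k) * x k * cnj (y j)) = x k * cnj (Hpm p m y k)"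
    proof (cases "k < M")
      case True
      have "Hpm p m y k = (\<Sum>j<N. of_real (hh p m k j) * y j)"
        using True by (intro Hpm_sum) (auto simp: N_def)
      then have "cnj (Hpm p m y k) = (\<Sum>j<N. of_real (hh p m j k) * cnj (y j))"
        using hh_sym[OF m1] by simp
      then show ?thesis by (simp add: sum_distrib_left algebra_simps)
    next
      case False
      then show ?thesis using xM by simp
    qed
  qed
  also have "\<dots> = inner_l2 x (Hpm p m y)"
    unfolding inner_l2_def
    by (rule suminf_finite[symmetric]) (auto simp: N_def xM)
  finally show ?thesis .
qed

lemma poly_bound: "poly_Bp p x \<Longrightarrow> \<exists>M. \<forall>k\<ge>M. x k = 0"
proof -
  assume "poly_Bp p x"
  then have "finite {k. x k \<noteq> 0}" by (simp add: poly_Bp_def)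
  then obtain M where M: "{k. x k \<noteq> 0} \<subseteq> {..<M}" by (rule finite_nat_bounded[THEN exE])
  have "\<forall>k\<ge>M. x k = 0"
  proof (intro allI impI)
    fix k assume "k \<ge> M"
    then have "k \<notin> {..<M}" by simp
    then show "x k = 0" using M by blast
  qed
  then show ?thesis by blast
qed

lemma finite_from_bound: fixes M :: nat shows "(\<And>k. k \<ge> M \<Longrightarrow> x k = 0) \<Longrightarrow> finite {k. x k \<noteq> 0}"
proof -
  assume a: "\<And>k. k \<ge> M \<Longrightarrow> x k = 0"
  have "{k. x k \<noteq> 0} \<subseteq> {..<M}"
  proof
    fix k assume "k \<in> {k. x k \<noteq> 0}"
    then have "\<not> k \<ge> M" using a by auto
    then show "k \<in> {..<M}" by simp
  qed
  then show ?thesis by (rule finite_subset) simp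
qed

lemma poly_l2: "poly_Bp p x \<Longrightarrow> l2 x"
  by (simp add: poly_Bp_def l2_finite)

lemma poly_Bp_in: "poly_Bp p x \<Longrightarrow> x \<in> Bp p"
  by (simp add: poly_Bp_def Bp_def l2_finite)

lemma Hpm_poly: "poly_Bp p x \<Longrightarrow> poly_Bp p (Hpm p m x)"
proof -
  assume a: "poly_Bp p x"
  obtain M where M: "\<forall>k\<ge>M. x k = 0" using poly_bound[OF a] by blast
  have "finite {k. Hpm p m x k \<noteq> 0}"
    by (rule finite_from_bound[of "M + m"]) (rule Hpm_high[of M], use M in auto)
  then show ?thesis by (simp add: poly_Bp_def Hpm_low)
qed

lemma Hpm_sym_poly: "m \<ge> 1 \<Longrightarrow> poly_Bp p x \<Longrightarrow> inner_l2 (Hpm p m x) y = inner_l2 x (Hpm p m y)"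
  using poly_bound Hpm_sym by metis

lemma conv_const: "l2 x \<Longrightarrow> conv_l2 (\<lambda>n. x) x"
  by (simp add: conv_l2_def)

lemma poly_in_Hmin: "poly_Bp p x \<Longrightarrow> (x, Hpm p m x) \<in> Hmin p m"
  unfolding Hmin_def
  by (auto intro!: exI[of _ "\<lambda>n. x"] poly_Bp_in Hpm_poly conv_const poly_l2)



definition ee :: "nat \<Rightarrow> nat \<Rightarrow> complex" where "ee k = (\<lambda>j. if j = k then 1 else 0)"

lemma ee_poly: "p \<le> k \<Longrightarrow> poly_Bp p (ee k)"
  unfolding poly_Bp_def ee_def by auto

lemma inner_ee: "inner_l2 y (ee k) = y k"
proof -
  have "inner_l2 y (ee k) = (\<Sum>j\<in>{k}. y j * cnj (ee k j))"
    unfolding inner_l2_def by (rule suminf_finite) (auto simp: ee_def)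
  then show ?thesis by (simp add: ee_def)
qed

lemma Hmin_l2:
  assumes "(x, y) \<in> Hmin p m"
  shows "l2 x" "l2 y" "x \<in> Bp p" "y \<in> Bp p"
  using assms by (auto simp: Hmin_def Bp_def)

lemma Hmin_inner:
  assumes m1: "m \<ge> 1" and xy: "(x, y) \<in> Hmin p m" and z: "poly_Bp p z"
  shows "inner_l2 y z = inner_l2 x (Hpm p m z)"
proof -
  obtain xs where xs: "\<And>n. poly_Bp p (xs n)" "conv_l2 xs x" "conv_l2 (\<lambda>n. Hpm p m (xs n)) y"
    using xy by (auto simp: Hmin_def)
  have l: "l2 x" "l2 y" using Hmin_l2[OF xy] by auto
  have a: "(\<lambda>n. inner_l2 (Hpm p m (xs n)) z) \<longlonglongrightarrow> inner_l2 y z"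
    by (rule conv_inner1[OF _ l(2) poly_l2[OF z] xs(3)]) (rule poly_l2[OF Hpm_poly[OF xs(1)]])
  have b: "(\<lambda>n. inner_l2 (xs n) (Hpm p m z)) \<longlonglongrightarrow> inner_l2 x (Hpm p m z)"
    by (rule conv_inner1[OF _ l(1) poly_l2[OF Hpm_poly[OF z]] xs(2)]) (rule poly_l2[OF xs(1)])
  have "inner_l2 (Hpm p m (xs n)) z = inner_l2 (xs n) (Hpm p m z)" for n
    by (rule Hpm_sym_poly[OF m1 xs(1)])
  with a have "(\<lambda>n. inner_l2 (xs n) (Hpm p m z)) \<longlonglongrightarrow> inner_l2 y z" by simp
  with b show ?thesis using LIMSEQ_unique by blast
qed

lemma Hmin_operator:
  assumes m1: "m \<ge> 1"
  shows "is_operator p (Hmin p m)"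
  unfolding is_operator_def
proof (intro conjI allI impI)
  show "Hmin p m \<subseteq> Bp p \<times> Bp p" by (auto simp: Hmin_def)
  fix x y y' assume a: "(x, y) \<in> Hmin p m" "(x, y') \<in> Hmin p m"
  show "y = y'"
  proof
    fix k
    show "y k = y' k"
    proof (cases "k < p")
      case True
      then show ?thesis using Hmin_l2[OF a(1)] Hmin_l2[OF a(2)] by (simp add: Bp_def)
    next
      case False
      then have e: "poly_Bp p (ee k)" by (intro ee_poly) simp
      have "y k = inner_l2 y (ee k)" by (simp add: inner_ee)
      also have "\<dots> = inner_l2 x (Hpm p m (ee k))" by (rule Hmin_inner[OF m1 a(1) e])
      also have "\<dots> = inner_l2 y' (ee k)" by (rule Hmin_inner[OF m1 a(2) e, symmetric])
      also have "\<dots> = y' k" by (simp add: inner_ee)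
      finally show ?thesis .
    qed
  qed
qed

lemma Hmin_symm:
  assumes m1: "m \<ge> 1" and a: "(x, u) \<in> Hmin p m" and b: "(y, v) \<in> Hmin p m"
  shows "inner_l2 u y = inner_l2 x v"
proof -
  obtain ys where ys: "\<And>n. poly_Bp p (ys n)" "conv_l2 ys y" "conv_l2 (\<lambda>n. Hpm p m (ys n)) v"
    using b by (auto simp: Hmin_def)
  have la: "l2 x" "l2 u" using Hmin_l2[OF a] by auto
  have lb: "l2 y" "l2 v" using Hmin_l2[OF b] by auto
  have c1: "(\<lambda>n. inner_l2 u (ys n)) \<longlonglongrightarrow> inner_l2 u y"
    by (rule conv_inner2[OF _ lb(1) la(2) ys(2)]) (rule poly_l2[OF ys(1)])
  have c2: "(\<lambda>n. inner_l2 x (Hpm p m (ys n))) \<longlonglongrightarrow> inner_l2 x v"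
    by (rule conv_inner2[OF _ lb(2) la(1) ys(3)]) (rule poly_l2[OF Hpm_poly[OF ys(1)]])
  have "inner_l2 u (ys n) = inner_l2 x (Hpm p m (ys n))" for n
    by (rule Hmin_inner[OF m1 a ys(1)])
  with c1 have "(\<lambda>n. inner_l2 x (Hpm p m (ys n))) \<longlonglongrightarrow> inner_l2 u y" by simp
  with c2 show ?thesis using LIMSEQ_unique by blast
qed

lemma tail_to_zero:
  fixes g :: "nat \<Rightarrow> real"
  assumes g: "summable g"
  shows "(\<lambda>n. \<Sum>k. if k < n then 0 else g k) \<longlonglongrightarrow> 0"
proof -
  have e: "(\<Sum>k. if k < n then 0 else g k) = suminf g - (\<Sum>k<n. g k)" for n
  proof -
    have f: "(\<Sum>k. if k < n then g k else 0) = (\<Sum>k<n. g k)"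
      by (subst suminf_finite[of "{..<n}"]) auto
    have s2: "summable (\<lambda>k. if k < n then g k else 0)"
      by (rule summable_finite[of "{..<n}"]) auto
    have "suminf g - (\<Sum>k. if k < n then g k else 0) = (\<Sum>k. g k - (if k < n then g k else 0))"
      by (rule suminf_diff[OF g s2])
    also have "\<dots> = (\<Sum>k. if k < n then 0 else g k)"
      by (rule arg_cong[where f=suminf]) auto
    finally show ?thesis using f by simp
  qed
  have "(\<lambda>n. suminf g - (\<Sum>k<n. g k)) \<longlonglongrightarrow> suminf g - suminf g"
    by (intro tendsto_diff tendsto_const summable_LIMSEQ[OF g])
  then show ?thesis by (simp add: e)
qed

definition trunc :: "(nat \<Rightarrow> complex) \<Rightarrow> nat \<Rightarrow> nat \<Rightarrow> complex" where
  "trunc x n = (\<lambda>k. if k < n then x k else 0)"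

lemma Hmin_dense:
  assumes m1: "m \<ge> 1"
  shows "densely_defined p (Hmin p m)"
  unfolding densely_defined_def
proof
  fix x assume x: "x \<in> Bp p"
  have tp: "poly_Bp p (trunc x n)" for n
    using x unfolding poly_Bp_def trunc_def Bp_def
    by (auto intro: finite_subset[of _ "{..<n}"])
  show "\<exists>xs. (\<forall>n. xs n \<in> op_dom (Hmin p m)) \<and> conv_l2 xs x"
  proof (intro exI conjI allI)
    fix n
    show "trunc x n \<in> op_dom (Hmin p m)"
      unfolding op_dom_def using poly_in_Hmin[OF tp[of n]] by force
  next
    have g: "summable (\<lambda>k. (cmod (x k))^2)" using x by (simp add: Bp_def l2_def)
    have "(\<lambda>n. \<Sum>k. if k < n then 0 else (cmod (x k))^2) \<longlonglongrightarrow> 0" by (rule tail_to_zero[OF g])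
    moreover have "(\<Sum>k. (cmod (trunc x n k - x k))^2) = (\<Sum>k. if k < n then 0 else (cmod (x k))^2)" for n
      by (rule arg_cong[where f=suminf]) (auto simp: trunc_def)
    ultimately show "conv_l2 (trunc x) x" unfolding conv_l2_def by simp
  qed
qed

lemma conv_diag:
  assumes a: "\<And>n. l2 (a n)" and b: "\<And>n. l2 (b n)" and c: "l2 c"
    and ab: "\<And>n. NN (\<lambda>k. a n k - b n k) \<le> inverse (real (Suc n))"
    and bc: "conv_l2 b c"
  shows "conv_l2 a c"
proof -
  have bc': "(\<lambda>n. NN (\<lambda>k. b n k - c k)) \<longlonglongrightarrow> 0" using bc by (simp add: conv_l2_def NN_def)
  have "(\<lambda>n. NN (\<lambda>k. a n k - c k)) \<longlonglongrightarrow> 0"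
  proof (rule tendsto_sandwich[where f = "\<lambda>n. 0" and h = "\<lambda>n. 2 * inverse (real (Suc n)) + 2 * NN (\<lambda>k. b n k - c k)"])
    show "\<forall>\<^sub>F n in sequentially. 0 \<le> NN (\<lambda>k. a n k - c k)"
      using NN_nonneg[OF l2_diff[OF a c]] by simp
    show "\<forall>\<^sub>F n in sequentially. NN (\<lambda>k. a n k - c k) \<le> 2 * inverse (real (Suc n)) + 2 * NN (\<lambda>k. b n k - c k)"
    proof (rule always_eventually, rule allI)
      fix n
      have "NN (\<lambda>k. a n k - c k) = NN (\<lambda>k. (a n k - b n k) + (b n k - c k))" by simp
      also have "\<dots> \<le> 2 * NN (\<lambda>k. a n k - b n k) + 2 * NN (\<lambda>k. b n k - c k)"
        by (rule NN_add_le[OF l2_diff[OF a b] l2_diff[OF b c]])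
      also have "\<dots> \<le> 2 * inverse (real (Suc n)) + 2 * NN (\<lambda>k. b n k - c k)"
        using ab[of n] by simp
      finally show "NN (\<lambda>k. a n k - c k) \<le> 2 * inverse (real (Suc n)) + 2 * NN (\<lambda>k. b n k - c k)" .
    qed
    show "(\<lambda>n. 0) \<longlonglongrightarrow> (0::real)" by simp
    have "(\<lambda>n. 2 * inverse (real (Suc n)) + 2 * NN (\<lambda>k. b n k - c k)) \<longlonglongrightarrow> 2 * 0 + 2 * 0"
      by (intro tendsto_add tendsto_mult tendsto_const LIMSEQ_inverse_real_of_nat bc')
    then show "(\<lambda>n. 2 * inverse (real (Suc n)) + 2 * NN (\<lambda>k. b n k - c k)) \<longlonglongrightarrow> 0" by simp
  qed
  then show ?thesis by (simp add: conv_l2_def NN_def)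
qed

lemma Hmin_closed:
  assumes m1: "m \<ge> 1"
  shows "closed_op p (Hmin p m)"
  unfolding closed_op_def
proof (intro allI impI)
  fix xs ys x y
  assume A: "(\<forall>n. (xs n, ys n) \<in> Hmin p m) \<and> x \<in> Bp p \<and> y \<in> Bp p \<and> conv_l2 xs x \<and> conv_l2 ys y"
  then have H: "\<And>n. (xs n, ys n) \<in> Hmin p m" and x: "x \<in> Bp p" and y: "y \<in> Bp p"
    and cx: "conv_l2 xs x" and cy: "conv_l2 ys y" by auto
  have lx: "l2 x" "l2 y" using x y by (auto simp: Bp_def)
  have ex: "\<exists>w. poly_Bp p w \<and> NN (\<lambda>k. w k - xs n k) \<le> inverse (real (Suc n))
      \<and> NN (\<lambda>k. Hpm p m w k - ys n k) \<le> inverse (real (Suc n))" for n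
  proof -
    obtain zs where zs: "\<And>j. poly_Bp p (zs j)" "conv_l2 zs (xs n)" "conv_l2 (\<lambda>j. Hpm p m (zs j)) (ys n)"
      using H[of n] by (auto simp: Hmin_def)
    have e: "inverse (real (Suc n)) > 0" by simp
    have t1: "(\<lambda>j. NN (\<lambda>k. zs j k - xs n k)) \<longlonglongrightarrow> 0" using zs(2) by (simp add: conv_l2_def NN_def)
    have t2: "(\<lambda>j. NN (\<lambda>k. Hpm p m (zs j) k - ys n k)) \<longlonglongrightarrow> 0" using zs(3) by (simp add: conv_l2_def NN_def)
    have "\<forall>\<^sub>F j in sequentially. NN (\<lambda>k. zs j k - xs n k) < inverse (real (Suc n))"
      using order_tendstoD(2)[OF t1 e] .
    moreover have "\<forall>\<^sub>F j in sequentially. NN (\<lambda>k. Hpm p m (zs j) k - ys n k) < inverse (real (Suc n))"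
      using order_tendstoD(2)[OF t2 e] .
    ultimately have "\<forall>\<^sub>F j in sequentially. NN (\<lambda>k. zs j k - xs n k) < inverse (real (Suc n))
        \<and> NN (\<lambda>k. Hpm p m (zs j) k - ys n k) < inverse (real (Suc n))"
      by (rule eventually_conj)
    then obtain j0 where "\<forall>j\<ge>j0. NN (\<lambda>k. zs j k - xs n k) < inverse (real (Suc n))
        \<and> NN (\<lambda>k. Hpm p m (zs j) k - ys n k) < inverse (real (Suc n))"
      unfolding eventually_sequentially by blast
    then obtain j where "NN (\<lambda>k. zs j k - xs n k) < inverse (real (Suc n))
        \<and> NN (\<lambda>k. Hpm p m (zs j) k - ys n k) < inverse (real (Suc n))" by blast
    then show ?thesis using zs(1)[of j] by (intro exI[of _ "zs j"]) auto
  qed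
  then obtain w where w: "\<And>n. poly_Bp p (w n)" "\<And>n. NN (\<lambda>k. w n k - xs n k) \<le> inverse (real (Suc n))"
      "\<And>n. NN (\<lambda>k. Hpm p m (w n) k - ys n k) \<le> inverse (real (Suc n))"
    by metis
  have lxs: "l2 (xs n)" "l2 (ys n)" for n using Hmin_l2[OF H[of n]] by auto
  have c1: "conv_l2 w x"
    by (rule conv_diag[OF _ lxs(1) lx(1) w(2) cx]) (rule poly_l2[OF w(1)])
  have c2: "conv_l2 (\<lambda>n. Hpm p m (w n)) y"
    by (rule conv_diag[OF _ lxs(2) lx(2) w(3) cy]) (rule poly_l2[OF Hpm_poly[OF w(1)]])
  show "(x, y) \<in> Hmin p m" unfolding Hmin_def using x y w(1) c1 c2 by blast
qed



lemma inner_ee2: "inner_l2 (ee k) z = cnj (z k)"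
proof -
  have "inner_l2 (ee k) z = (\<Sum>j\<in>{k}. ee k j * cnj (z j))"
    unfolding inner_l2_def by (rule suminf_finite) (auto simp: ee_def)
  then show ?thesis by (simp add: ee_def)
qed

lemma inner_congr: "(\<And>k. x k \<noteq> 0 \<Longrightarrow> z k = z' k) \<Longrightarrow> inner_l2 x z = inner_l2 x z'"
  unfolding inner_l2_def by (rule arg_cong[where f=suminf]) (metis mult_zero_left)

lemma eig_char:
  assumes m1: "m \<ge> 1"
  shows "y \<in> eig_space (adjoint_op p (Hmin p m)) lam \<longleftrightarrow> y \<in> Bp p \<and> (\<forall>k\<ge>p. Hpm p m y k = lam * y k)"
proof
  assume A: "y \<in> eig_space (adjoint_op p (Hmin p m)) lam"
  then have y: "y \<in> Bp p" and ly: "(\<lambda>k. lam * y k) \<in> Bp p"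
    and ad: "\<forall>(x, w)\<in>Hmin p m. inner_l2 w y = inner_l2 x (\<lambda>k. lam * y k)"
    by (auto simp: eig_space_def adjoint_op_def)
  have "Hpm p m y k = lam * y k" if k: "k \<ge> p" for k
  proof -
    have e: "poly_Bp p (ee k)" using k by (rule ee_poly)
    have "inner_l2 (Hpm p m (ee k)) y = inner_l2 (ee k) (\<lambda>k. lam * y k)"
      using ad poly_in_Hmin[OF e, of m] by auto
    moreover have "inner_l2 (Hpm p m (ee k)) y = inner_l2 (ee k) (Hpm p m y)"
      by (rule Hpm_sym_poly[OF m1 e])
    ultimately have "cnj (Hpm p m y k) = cnj (lam * y k)" by (simp only: inner_ee2)
    then show ?thesis by (simp only: complex_cnj_cancel_iff)
  qed
  then show "y \<in> Bp p \<and> (\<forall>k\<ge>p. Hpm p m y k = lam * y k)" using y by auto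
next
  assume A: "y \<in> Bp p \<and> (\<forall>k\<ge>p. Hpm p m y k = lam * y k)"
  then have y: "y \<in> Bp p" and r: "\<And>k. k \<ge> p \<Longrightarrow> Hpm p m y k = lam * y k" by auto
  have l: "l2 y" using y by (simp add: Bp_def)
  have ly: "(\<lambda>k. lam * y k) \<in> Bp p" using y by (simp add: Bp_def l2_scale)
  have "inner_l2 w y = inner_l2 x (\<lambda>k. lam * y k)" if xw: "(x, w) \<in> Hmin p m" for x w
  proof -
    obtain xs where xs: "\<And>n. poly_Bp p (xs n)" "conv_l2 xs x" "conv_l2 (\<lambda>n. Hpm p m (xs n)) w"
      using xw by (auto simp: Hmin_def)
    have lxw: "l2 x" "l2 w" using Hmin_l2[OF xw] by auto
    have c1: "(\<lambda>n. inner_l2 (Hpm p m (xs n)) y) \<longlonglongrightarrow> inner_l2 w y"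
      by (rule conv_inner1[OF _ lxw(2) l xs(3)]) (rule poly_l2[OF Hpm_poly[OF xs(1)]])
    have c2: "(\<lambda>n. inner_l2 (xs n) (\<lambda>k. lam * y k)) \<longlonglongrightarrow> inner_l2 x (\<lambda>k. lam * y k)"
      by (rule conv_inner1[OF _ lxw(1) l2_scale[OF l] xs(2)]) (rule poly_l2[OF xs(1)])
    have "inner_l2 (Hpm p m (xs n)) y = inner_l2 (xs n) (\<lambda>k. lam * y k)" for n
    proof -
      have "inner_l2 (Hpm p m (xs n)) y = inner_l2 (xs n) (Hpm p m y)"
        by (rule Hpm_sym_poly[OF m1 xs(1)])
      also have "\<dots> = inner_l2 (xs n) (\<lambda>k. lam * y k)"
      proof (rule inner_congr)
        fix k assume "xs n k \<noteq> 0"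
        then have "k \<ge> p" using xs(1)[of n] by (auto simp: poly_Bp_def not_le[symmetric])
        then show "Hpm p m y k = lam * y k" by (rule r)
      qed
      finally show ?thesis .
    qed
    with c1 have "(\<lambda>n. inner_l2 (xs n) (\<lambda>k. lam * y k)) \<longlonglongrightarrow> inner_l2 w y" by simp
    with c2 show ?thesis using LIMSEQ_unique by blast
  qed
  then show "y \<in> eig_space (adjoint_op p (Hmin p m)) lam"
    using y ly by (auto simp: eig_space_def adjoint_op_def)
qed

function sol :: "nat \<Rightarrow> nat \<Rightarrow> complex \<Rightarrow> (nat \<Rightarrow> complex) \<Rightarrow> nat \<Rightarrow> complex" where
  "sol p m lam a k = (if m = 0 \<or> k < p + m then (if p \<le> k then a (k - p) else 0)
     else (lam * sol p m lam a (k - m)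
       - of_real (if m \<le> k - m then cplus p m (k - m - m) else 0) * sol p m lam a (k - m - m))
       / of_real (cplus p m (k - m)))"
  by pat_completeness auto
termination by (relation "measure (\<lambda>(p, m, lam, a, k). k)") auto

declare sol.simps [simp del]

lemma sol_low: "k < p \<Longrightarrow> sol p m lam a k = 0"
  by (subst sol.simps) auto

lemma sol_init: "p \<le> k \<Longrightarrow> k < p + m \<Longrightarrow> sol p m lam a k = a (k - p)"
  by (subst sol.simps) auto

lemma sol_rec:
  assumes m1: "m \<ge> 1" and k: "p \<le> k"
  shows "Hpm p m (sol p m lam a) k = lam * sol p m lam a k"
proof -
  have c: "cplus p m k \<ge> 1" using cplus_ge1[OF k] .
  have "sol p m lam a (k + m) = (lam * sol p m lam a k
       - of_real (if m \<le> k then cplus p m (k - m) else 0) * sol p m lam a (k - m))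
       / of_real (cplus p m k)"
    using m1 k by (subst sol.simps) simp
  then have "of_real (cplus p m k) * sol p m lam a (k + m) = lam * sol p m lam a k
       - of_real (if m \<le> k then cplus p m (k - m) else 0) * sol p m lam a (k - m)"
    using c by (simp add: field_simps)
  then show ?thesis unfolding Hpm_def cminus_shift by (auto simp: algebra_simps)
qed

lemma rec_uniq:
  assumes m1: "m \<ge> 1"
    and y0: "\<And>k. k < p \<Longrightarrow> y k = 0" and z0: "\<And>k. k < p \<Longrightarrow> z k = 0"
    and ry: "\<And>k. k \<ge> p \<Longrightarrow> Hpm p m y k = lam * y k"
    and rz: "\<And>k. k \<ge> p \<Longrightarrow> Hpm p m z k = lam * z k"
    and init: "\<And>k. p \<le> k \<Longrightarrow> k < p + m \<Longrightarrow> y k = z k"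
  shows "y k = z k"
proof (induction k rule: less_induct)
  case (less k)
  show ?case
  proof (cases "k < p + m")
    case True
    then show ?thesis using y0 z0 init by (cases "k < p") auto
  next
    case False
    define j where "j = k - m"
    have j: "j \<ge> p" "k = j + m" "j < k" using False m1 by (auto simp: j_def)
    have c: "cplus p m j \<ge> 1" using cplus_ge1[OF j(1)] .
    have ih1: "y j = z j" using less.IH j by simp
    have ih2: "m \<le> j \<Longrightarrow> y (j - m) = z (j - m)" using less.IH j m1 by simp
    have ey: "of_real (cplus p m j) * y k = lam * y j - (if m \<le> j then of_real (cplus p m (j - m)) * y (j - m) else 0)"
      using ry[OF j(1)] j(2) unfolding Hpm_def cminus_shift by (simp add: algebra_simps)
    have ez: "of_real (cplus p m j) * z k = lam * z j - (if m \<le> j then of_real (cplus p m (j - m)) * z (j - m) else 0)"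
      using rz[OF j(1)] j(2) unfolding Hpm_def cminus_shift by (simp add: algebra_simps)
    have "of_real (cplus p m j) * y k = of_real (cplus p m j) * z k"
      using ey ez ih1 ih2 by (cases "m \<le> j") auto
    then show ?thesis using c by simp
  qed
qed

lemma sol_l2:
  assumes m1: "m \<ge> 1" and pm: "2 * p + m \<ge> 3" and lam: "cmod lam = 1"
  shows "l2 (sol p m lam a)"
  unfolding l2_def
proof (rule rec_l2[OF m1 pm lam])
  show "\<forall>k<p. sol p m lam a k = 0" by (simp add: sol_low)
  show "\<forall>k\<ge>p. complex_of_real (cplus p m k) * sol p m lam a (k + m) +
        (if m \<le> k then complex_of_real (cplus p m (k - m)) * sol p m lam a (k - m) else 0) =
        lam * sol p m lam a k"
    using sol_rec[OF m1] unfolding Hpm_def cminus_shift by simp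
qed

lemma Hpm_lin: "Hpm p m (\<lambda>k. \<Sum>j<d. c j * v j k) i = (\<Sum>j<d. c j * Hpm p m (v j) i)"
  by (simp add: Hpm_def sum_distrib_left sum.distrib algebra_simps)

lemma dim_m:
  assumes m1: "m \<ge> 1" and pm: "2 * p + m \<ge> 3" and lam: "cmod lam = 1"
  shows "has_dim (eig_space (adjoint_op p (Hmin p m)) lam) m"
proof -
  define v where "v j = sol p m lam (\<lambda>i. if i = j then 1 else 0)" for j
  have vB: "v j \<in> Bp p" for j
    unfolding Bp_def v_def using sol_l2[OF m1 pm lam] sol_low by auto
  have vr: "k \<ge> p \<Longrightarrow> Hpm p m (v j) k = lam * v j k" for j k
    unfolding v_def by (rule sol_rec[OF m1])
  have vi: "i < m \<Longrightarrow> v j (p + i) = (if i = j then 1 else 0)" for i j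
    unfolding v_def by (subst sol_init) auto
  show ?thesis
    unfolding has_dim_def
  proof (intro exI conjI allI impI ballI)
    fix j assume "j < m"
    show "v j \<in> eig_space (adjoint_op p (Hmin p m)) lam"
      using eig_char[OF m1] vB vr by auto
  next
    fix c :: "nat \<Rightarrow> complex" and i
    assume z: "\<forall>k. (\<Sum>j<m. c j * v j k) = 0" and i: "i < m"
    have "0 = (\<Sum>j<m. c j * v j (p + i))" using z by simp
    also have "\<dots> = (\<Sum>j<m. if j = i then c j else 0)"
      using i vi by (intro sum.cong) auto
    also have "\<dots> = c i" using i by (simp add: sum.delta)
    finally show "c i = 0" by simp
  next
    fix y assume "y \<in> eig_space (adjoint_op p (Hmin p m)) lam"
    then have y: "y \<in> Bp p" and ry: "\<And>k. k \<ge> p \<Longrightarrow> Hpm p m y k = lam * y k"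
      using eig_char[OF m1] by auto
    define c where "c j = y (p + j)" for j
    define z where "z = (\<lambda>k. \<Sum>j<m. c j * v j k)"
    have "y k = z k" for k
    proof (rule rec_uniq[OF m1])
      show "\<And>k. k < p \<Longrightarrow> y k = 0" using y by (simp add: Bp_def)
      show "\<And>k. k < p \<Longrightarrow> z k = 0" unfolding z_def using vB by (simp add: Bp_def)
      show "\<And>k. k \<ge> p \<Longrightarrow> Hpm p m y k = lam * y k" by (rule ry)
      show "Hpm p m z k = lam * z k" if "k \<ge> p" for k
        unfolding z_def Hpm_lin using vr[OF that] by (simp add: sum_distrib_left algebra_simps)
      show "y k = z k" if "p \<le> k" "k < p + m" for k
      proof -
        define i where "i = k - p"
        have i: "i < m" "k = p + i" using that by (auto simp: i_def)
        have "z k = (\<Sum>j<m. if j = i then c j else 0)"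
          unfolding z_def using i vi by (intro sum.cong) auto
        also have "\<dots> = c i" using i by (simp add: sum.delta)
        finally show ?thesis using i by (simp add: c_def)
      qed
    qed
    then show "y = (\<lambda>k. \<Sum>j<m. c j * v j k)" unfolding z_def by auto
  qed
qed

theorem theorem2p3:
  fixes p m :: nat
  assumes "m \<ge> 1" and "real p + real m / 2 > 1"
  shows "is_operator p (Hmin p m) \<and> closed_op p (Hmin p m) \<and> symmetric_op p (Hmin p m)
         \<and> deficiency_plus p (Hmin p m) m \<and> deficiency_minus p (Hmin p m) m"
proof -
  have pm: "2 * p + m \<ge> 3" using assms(2) by linarith
  have sym: "symmetric_op p (Hmin p m)"
    unfolding symmetric_op_def
    using Hmin_operator[OF assms(1)] Hmin_dense[OF assms(1)] Hmin_symm[OF assms(1)] by auto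
  show ?thesis
    using Hmin_operator[OF assms(1)] Hmin_closed[OF assms(1)] sym
      dim_m[OF assms(1) pm, of "\<i>"] dim_m[OF assms(1) pm, of "- \<i>"]
    by (simp add: deficiency_plus_def deficiency_minus_def)
qed

end
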